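(* Let $k$ be a positive integer and $S=K[x_1,\ldots,x_n]$. Then: if $n=4k$, $V(n,2)=\bigcup_{0\le i\le\sqrt k}W_{2k-i}$; if $n=4k+1$ with $k\neq 1$, $V(n,2)=\bigcup_{0\le i\le(\sqrt{1+4k}-1)/2}W_{2k-i}$; if $n=5$, $V(5,2)=W_2\cup C_5$; and if $n=4k+2$ or $n=4k+3$, $V(n,2)=\emptyset$. (Here $i$ ranges over integers.)
   Context: $K$ is a field; $G(I)$ is the minimal monomial generating set of a monomial ideal $I$. With $\sigma$ the bijection $x_{i_1}\cdots x_{i_k}\mapsto\{i_1,\ldots,i_k\}$, the facet complex $\delta_{\mathcal{F}}(I)$ has facets $\sigma(g)$, $g\in G(I)$, the Stanley–Reisner complex is $\delta_{\mathcal{N}}(I)=\{\sigma(g)\mid g\text{ square-free monomial},\ g\notin I\}$, and a square-free monomial ideal $I$ is an $f$-ideal if both have the same $f$-vector. $V(n,2)$ is the set of $f$-ideals of $S$ all of whose minimal generators have degree 2. For a nonempty proper $B\subset[n]$ with complement $\overline B$, $W_B=\{x_ix_j\mid i\ne j,\ i,j\in B\text{ or } i,j\in\overline B\}$; such an $f$-ideal $I$ is of $l$ type if $W_B\subseteq G(I)$ for some $B$ with $|B|=l$, and $W_l$ is the set of $f$-ideals of $S$ of $l$ type. For $n=5$, $C_5$ denotes the set of ideals of $K[x_1,\ldots,x_5]$ generated by $\{x_ix_j\mid v_iv_j\in E(T)\}$ where $T$ ranges over the cycles of length 5 on the vertex set $\{v_1,\ldots,v_5\}$ (for example $\langle x_1x_2,x_2x_3,x_3x_4,x_4x_5,x_1x_5\rangle$).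 *)

theory Defs
  imports Complex_Main
begin

text \<open>A square-free monomial ideal of S = K[x_1,...,x_n] is represented by its minimal
monomial generating set G(I), each square-free monomial x_{i_1}...x_{i_k} being identified
with its support set sigma(g) = {i_1,...,i_k} (a subset of {1..n}).  A set of supports is
the minimal generating set of a square-free monomial ideal iff it is an antichain.
A square-free monomial m lies in I iff some minimal generator divides m, i.e. iff
sigma(g) is contained in sigma(m) for some g in G(I).\<close>

definition sqfree_gens :: "nat \<Rightarrow> nat set set \<Rightarrow> bool" where
  "sqfree_gens n G \<longleftrightarrow> finite G \<and> (\<forall>g\<in>G. g \<subseteq> {1..n}) \<and>
     (\<forall>g\<in>G. \<forall>h\<in>G. g \<subseteq> h \<longrightarrow> g = h)"

definition facet_complex :: "nat set set \<Rightarrow> nat set set" where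
  "facet_complex G = {F. \<exists>g\<in>G. F \<subseteq> g}"

definition SR_complex :: "nat \<Rightarrow> nat set set \<Rightarrow> nat set set" where
  "SR_complex n G = {F. F \<subseteq> {1..n} \<and> \<not> (\<exists>g\<in>G. g \<subseteq> F)}"

text \<open>f-vector: f_{d-1} = number of faces with d vertices (d \<ge> 1).\<close>
definition fvec :: "nat set set \<Rightarrow> nat \<Rightarrow> nat" where
  "fvec \<Delta> d = card {F\<in>\<Delta>. card F = Suc d}"

definition is_f_ideal :: "nat \<Rightarrow> nat set set \<Rightarrow> bool" where
  "is_f_ideal n G \<longleftrightarrow> sqfree_gens n G \<and>
     (\<forall>d. fvec (facet_complex G) d = fvec (SR_complex n G) d)"

definition V2 :: "nat \<Rightarrow> nat set set set" where
  "V2 n = {G. is_f_ideal n G \<and> (\<forall>g\<in>G. card g = 2)}"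

definition W_set :: "nat \<Rightarrow> nat set \<Rightarrow> nat set set" where
  "W_set n B = {{i, j} | i j. i \<noteq> j \<and>
     ((i \<in> B \<and> j \<in> B) \<or> (i \<in> {1..n} - B \<and> j \<in> {1..n} - B))}"

definition W_type :: "nat \<Rightarrow> nat \<Rightarrow> nat set set set" where
  "W_type n l = {G \<in> V2 n. \<exists>B. B \<subseteq> {1..n} \<and> B \<noteq> {} \<and> B \<noteq> {1..n} \<and>
      card B = l \<and> W_set n B \<subseteq> G}"

definition C5 :: "nat set set set" where
  "C5 = {G. \<exists>p. bij_betw p {1..5::nat} {1..5} \<and>
      G = (\<lambda>i. {p i, p (i mod 5 + 1)}) ` {1..5}}"

end

theory Submission
  imports Defs
begin


lemma sub3:
  assumes "card g = 2" "g \<subseteq> {x,y,z}"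
  shows "g = {x,y} \<or> g = {y,z} \<or> g = {x,z}"
proof -
  obtain a b where g: "g = {a,b}" "a \<noteq> b" using assms(1) card_2_iff by metis
  have "a \<in> {x,y,z}" "b \<in> {x,y,z}" using assms(2) g by auto
  then show ?thesis using g by (auto simp: insert_commute)
qed

lemma pair_piece:
  assumes "card s = 2"
  shows "card {(x,y). x \<noteq> y \<and> {x,y} = s} = 2"
proof -
  obtain a b where g: "s = {a,b}" "a \<noteq> b" using assms card_2_iff by metis
  have "{(x,y). x \<noteq> y \<and> {x,y} = s} = {(a,b),(b,a)}"
  proof (rule set_eqI, clarify)
    fix x y show "((x,y) \<in> {(x,y). x \<noteq> y \<and> {x,y} = s}) = ((x,y) \<in> {(a,b),(b,a)})"
      using g by (simp add: doubleton_eq_iff) blast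
  qed
  then show ?thesis using g by simp
qed
lemma pairs_card:
  assumes "finite S" "\<forall>s\<in>S. card s = 2"
  shows "card {(x,y). x \<noteq> y \<and> {x,y} \<in> S} = 2 * card S"
proof -
  have eq: "{(x,y). x \<noteq> y \<and> {x,y} \<in> S} = (\<Union>s\<in>S. {(x,y). x \<noteq> y \<and> {x,y} = s})" by auto
  have fin: "\<forall>s\<in>S. finite {(x,y). x \<noteq> y \<and> {x,y} = s}"
  proof
    fix s assume "s \<in> S"
    then have "card {(x,y). x \<noteq> y \<and> {x,y} = s} = 2" using pair_piece assms(2) by blast
    then show "finite {(x,y). x \<noteq> y \<and> {x,y} = s}" by (intro card_ge_0_finite) simp
  qed
  have "card (\<Union>s\<in>S. {(x,y). x \<noteq> y \<and> {x,y} = s}) = (\<Sum>s\<in>S. card {(x,y). x \<noteq> y \<and> {x,y} = s})"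
  proof (rule card_UN_disjoint)
    show "finite S" by (rule assms(1))
    show "\<forall>i\<in>S. finite {(x,y). x \<noteq> y \<and> {x,y} = i}" by (rule fin)
    show "\<forall>i\<in>S. \<forall>j\<in>S. i \<noteq> j \<longrightarrow> {(x,y). x \<noteq> y \<and> {x,y} = i} \<inter> {(x,y). x \<noteq> y \<and> {x,y} = j} = {}"
      by blast
  qed
  also have "\<dots> = (\<Sum>s\<in>S. 2)" by (rule sum.cong) (use pair_piece assms(2) in auto)
  finally show ?thesis using eq by simp
qed

lemma V2D:
  assumes "G \<in> V2 n"
  shows "finite G" "\<And>g. g \<in> G \<Longrightarrow> g \<subseteq> {1..n}" "\<And>g. g \<in> G \<Longrightarrow> card g = 2"
    "2 * card G = n choose 2"
    "\<And>x y z. x \<in> {1..n} \<Longrightarrow> y \<in> {1..n} \<Longrightarrow> z \<in> {1..n} \<Longrightarrow> x \<noteq> y \<Longrightarrow> y \<noteq> z \<Longrightarrow> x \<noteq> z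
       \<Longrightarrow> {x,y} \<in> G \<or> {y,z} \<in> G \<or> {x,z} \<in> G"
proof -
  have sq: "sqfree_gens n G" and fv: "\<And>d. fvec (facet_complex G) d = fvec (SR_complex n G) d"
    and c2: "\<And>g. g \<in> G \<Longrightarrow> card g = 2"
    using assms by (auto simp: V2_def is_f_ideal_def)
  show fin: "finite G" and sub: "\<And>g. g \<in> G \<Longrightarrow> g \<subseteq> {1..n}" using sq by (auto simp: sqfree_gens_def)
  show "\<And>g. g \<in> G \<Longrightarrow> card g = 2" by (rule c2)
  let ?T = "{A. A \<subseteq> {1..n} \<and> card A = 2}"
  have f1: "{F \<in> facet_complex G. card F = Suc 1} = G"
  proof
    show "{F \<in> facet_complex G. card F = Suc 1} \<subseteq> G"
    proof
      fix F assume "F \<in> {F \<in> facet_complex G. card F = Suc 1}"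
      then obtain g where "g \<in> G" "F \<subseteq> g" "card F = 2" by (auto simp: facet_complex_def)
      moreover have "finite g" using c2[OF \<open>g \<in> G\<close>] by (intro card_ge_0_finite) simp
      ultimately show "F \<in> G" using c2[OF \<open>g \<in> G\<close>] card_subset_eq[of g F] by simp
    qed
    show "G \<subseteq> {F \<in> facet_complex G. card F = Suc 1}" using c2 by (auto simp: facet_complex_def)
  qed
  have s1: "{F \<in> SR_complex n G. card F = Suc 1} = ?T - G"
  proof
    show "{F \<in> SR_complex n G. card F = Suc 1} \<subseteq> ?T - G" by (auto simp: SR_complex_def)
    show "?T - G \<subseteq> {F \<in> SR_complex n G. card F = Suc 1}"
    proof
      fix F assume F: "F \<in> ?T - G"
      have "\<not> (\<exists>g\<in>G. g \<subseteq> F)"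
      proof
        assume "\<exists>g\<in>G. g \<subseteq> F"
        then obtain g where "g \<in> G" "g \<subseteq> F" by blast
        moreover have "card F = 2" using F by simp
        then have "finite F" by (intro card_ge_0_finite) simp
        ultimately have "g = F" using c2[OF \<open>g \<in> G\<close>] \<open>card F = 2\<close> card_subset_eq[of F g] by simp
        then show False using F \<open>g \<in> G\<close> by blast
      qed
      then show "F \<in> {F \<in> SR_complex n G. card F = Suc 1}" using F by (auto simp: SR_complex_def)
    qed
  qed
  have GT: "G \<subseteq> ?T" using sub c2 by auto
  have "card G = card (?T - G)" using fv[of 1] f1 s1 by (simp add: fvec_def)
  also have "\<dots> = card ?T - card G" using GT fin by (simp add: card_Diff_subset)
  also have "card ?T = n choose 2" using n_subsets[of "{1..n}" 2] by simp
  finally show "2 * card G = n choose 2" by linarith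
  have f2: "{F \<in> facet_complex G. card F = Suc 2} = {}"
  proof -
    { fix F g assume "g \<in> G" "F \<subseteq> g" "card F = 3"
      moreover have "finite g" using c2[OF \<open>g \<in> G\<close>] by (intro card_ge_0_finite) simp
      ultimately have False using card_mono[of g F] c2[of g] by simp }
    then show ?thesis by (auto simp: facet_complex_def)
  qed
  have finS: "finite {F \<in> SR_complex n G. card F = Suc 2}"
    by (rule finite_subset[of _ "Pow {1..n}"]) (auto simp: SR_complex_def)
  have "card {F \<in> SR_complex n G. card F = Suc 2} = 0" using fv[of 2, unfolded fvec_def] unfolding f2 by simp
  then have s2: "{F \<in> SR_complex n G. card F = Suc 2} = {}" using finS by simp
  fix x y z assume xyz: "x \<in> {1..n}" "y \<in> {1..n}" "z \<in> {1..n}" "x \<noteq> y" "y \<noteq> z" "x \<noteq> z"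
  then have "card {x,y,z} = Suc 2" by auto
  moreover have "{x,y,z} \<subseteq> {1..n}" using xyz by auto
  moreover from s2 have "{x,y,z} \<notin> {F \<in> SR_complex n G. card F = Suc 2}" by blast
  ultimately have "\<exists>g\<in>G. g \<subseteq> {x,y,z}" unfolding SR_complex_def by blast
  then show "{x,y} \<in> G \<or> {y,z} \<in> G \<or> {x,z} \<in> G" using sub3[OF c2] by blast
qed



lemma even_nn1: "even (n * (n - 1::nat))"
  by (cases "even n") (auto simp: even_mult_iff)

locale fg =
  fixes n :: nat and G :: "nat set set"
  assumes fin: "finite G" and sub: "\<And>g. g \<in> G \<Longrightarrow> g \<subseteq> {1..n}"
    and c2: "\<And>g. g \<in> G \<Longrightarrow> card g = 2" and half: "2 * card G = n choose 2"
    and tri: "\<And>x y z. x \<in> {1..n} \<Longrightarrow> y \<in> {1..n} \<Longrightarrow> z \<in> {1..n} \<Longrightarrow> x \<noteq> y \<Longrightarrow> y \<noteq> z \<Longrightarrow> x \<noteq> z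
       \<Longrightarrow> {x,y} \<in> G \<or> {y,z} \<in> G \<or> {x,z} \<in> G"
begin

definition adj where "adj x y \<longleftrightarrow> x \<in> {1..n} \<and> y \<in> {1..n} \<and> x \<noteq> y \<and> {x,y} \<notin> G"
definition N where "N x = {y \<in> {1..n}. adj x y}"
definition d where "d x = card (N x)"
definition P where "P = Sigma {1..n} N"

lemma adj_sym: "adj x y \<Longrightarrow> adj y x"
  unfolding adj_def by (auto simp: insert_commute)

lemma no_tri: "adj x y \<Longrightarrow> adj y z \<Longrightarrow> adj x z \<Longrightarrow> False"
  using tri[of x y z] unfolding adj_def by blast

lemma mem_N: "y \<in> N x \<longleftrightarrow> adj x y"
  unfolding N_def adj_def by auto

lemma N_sub: "N x \<subseteq> {1..n}" unfolding N_def by auto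
lemma finN: "finite (N x)" using N_sub finite_subset by blast
lemma notin_N: "x \<notin> N x" unfolding N_def adj_def by auto

lemma adjV: "adj x y \<Longrightarrow> x \<in> {1..n} \<and> y \<in> {1..n} \<and> x \<noteq> y" unfolding adj_def by auto

lemma notadj_G: "x \<in> {1..n} \<Longrightarrow> y \<in> {1..n} \<Longrightarrow> x \<noteq> y \<Longrightarrow> \<not> adj x y \<Longrightarrow> {x,y} \<in> G"
  unfolding adj_def by auto

lemma P_mem: "(x,y) \<in> P \<longleftrightarrow> adj x y"
  unfolding P_def using mem_N adjV by auto

lemma cardP: "2 * card P = n * (n - 1)"
proof -
  let ?V = "{1..n}"
  let ?Q = "?V \<times> ?V - (\<lambda>x. (x,x)) ` ?V"
  let ?R = "{(x,y). x \<noteq> y \<and> {x,y} \<in> G}"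
  have cR: "card ?R = n choose 2" using pairs_card[OF fin] c2 half by auto
  have RQ: "?R \<subseteq> ?Q" using sub by auto
  have PQ: "P = ?Q - ?R"
    by (auto simp: P_mem adj_def)
  have cQ: "card ?Q = n * n - n"
    by (subst card_Diff_subset) (auto simp: card_image inj_on_def card_cartesian_product)
  have finQ: "finite ?Q" by auto
  have "card P = card ?Q - card ?R" using PQ RQ finQ by (simp add: card_Diff_subset finite_subset)
  moreover have "2 * (n choose 2) = n * (n - 1)" using even_nn1[of n] by (simp add: choose_two)
  moreover have "n * n - n = n * (n - 1)" by (simp add: diff_mult_distrib2)
  ultimately show ?thesis using cQ cR by simp
qed

lemma sum_d: "(\<Sum>x\<in>{1..n}. d x) = card P"
  unfolding P_def d_def by (subst card_SigmaI) (auto simp: finN)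

lemma sum_d2: "(\<Sum>x\<in>{1..n}. d x * d x) = (\<Sum>(x,y)\<in>P. d x)"
proof -
  have "(\<Sum>(x,y)\<in>P. d x) = (\<Sum>x\<in>{1..n}. \<Sum>y\<in>N x. d x)"
    unfolding P_def by (subst sum.Sigma) (auto simp: finN)
  also have "\<dots> = (\<Sum>x\<in>{1..n}. d x * d x)" by (simp add: d_def)
  finally show ?thesis by simp
qed

lemma sum_swap: "(\<Sum>(x,y)\<in>P. d y) = (\<Sum>(x,y)\<in>P. d x)"
  by (rule sum.reindex_bij_witness[of _ prod.swap prod.swap]) (auto simp: P_mem adj_sym)

lemma finP: "finite P" unfolding P_def by (auto simp: finN)

lemma dich: "(\<exists>u v. adj u v \<and> n \<le> d u + d v) \<or> (\<forall>x\<in>{1..n}. 2 * d x + 1 = n)"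
proof (cases "\<exists>u v. adj u v \<and> n \<le> d u + d v")
  case True then show ?thesis by blast
next
  case False
  note na = False
  have "\<forall>x\<in>{1..n}. 2 * d x + 1 = n"
  proof (cases "n = 0")
    case True then show ?thesis by simp
  next
    case False
    let ?V = "{1..n}"
    have lt: "\<And>x y. (x,y) \<in> P \<Longrightarrow> d x + d y \<le> n - 1" using na P_mem by fastforce
    have "2 * (\<Sum>x\<in>?V. d x * d x) = (\<Sum>(x,y)\<in>P. d x) + (\<Sum>(x,y)\<in>P. d y)"
      using sum_d2 sum_swap by simp
    also have "\<dots> = (\<Sum>(x,y)\<in>P. d x + d y)" by (simp add: sum.distrib split_def)
    also have "\<dots> \<le> (\<Sum>(x,y)\<in>P. n - 1)" by (rule sum_mono) (use lt in auto)
    also have "\<dots> = card P * (n - 1)" by simp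
    finally have ineq: "2 * (\<Sum>x\<in>?V. d x * d x) \<le> card P * (n - 1)" .
    define c :: int where "c = int n - 1"
    define S2 :: int where "S2 = (\<Sum>x\<in>?V. int (d x) * int (d x))"
    define D :: int where "D = (\<Sum>x\<in>?V. int (d x))"
    have D: "D = int (card P)" unfolding D_def using sum_d by (metis of_nat_sum)
    have S2: "S2 = int (\<Sum>x\<in>?V. d x * d x)" unfolding S2_def by (simp add: of_nat_sum)
    have c1: "int (n - 1) = c" using False c_def by simp
    have i1: "2 * S2 \<le> D * c"
    proof -
      have "int (2 * (\<Sum>x\<in>?V. d x * d x)) \<le> int (card P * (n - 1))" using ineq by linarith
      then show ?thesis unfolding S2 D c1[symmetric] by simp
    qed
    have i2: "2 * D = int n * c"
    proof -
      have "int (2 * card P) = int (n * (n - 1))" using cardP by simp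
      then show ?thesis unfolding D c1[symmetric] by simp
    qed
    have E: "(\<Sum>x\<in>?V. (2 * int (d x) - c)^2) = 4 * S2 - 4 * c * D + int n * c^2"
    proof -
      have "(\<Sum>x\<in>?V. (2 * int (d x) - c)^2) = (\<Sum>x\<in>?V. 4 * (int (d x) * int (d x)) - 4 * c * int (d x) + c^2)"
        by (rule sum.cong) (auto simp: power2_eq_square algebra_simps)
      also have "\<dots> = 4 * S2 - 4 * c * D + int n * c^2"
        unfolding S2_def D_def by (simp add: sum.distrib sum_subtractf sum_distrib_left)
      finally show ?thesis .
    qed
    have "4 * S2 - 4 * c * D + int n * c^2 \<le> 0"
    proof -
      have h1: "4 * S2 \<le> 2 * (D * c)" using i1 by linarith
      have "int n * c^2 = (int n * c) * c" by (simp add: power2_eq_square algebra_simps)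
      also have "\<dots> = 2 * (D * c)" using i2[symmetric] by simp
      finally have h2: "int n * c^2 = 2 * (D * c)" .
      have h3: "4 * c * D = 4 * (D * c)" by simp
      show ?thesis using h1 h2 h3 by linarith
    qed
    then have "(\<Sum>x\<in>?V. (2 * int (d x) - c)^2) = 0"
      using E by (smt (verit) sum_nonneg zero_le_power2)
    then have "\<forall>x\<in>?V. (2 * int (d x) - c)^2 = 0"
      by (subst (asm) sum_nonneg_eq_0_iff) auto
    then show ?thesis using c_def by auto
  qed
  then show ?thesis by blast
qed

end


context fg begin

lemma part:
  assumes uv: "adj u v" and ge: "n \<le> d u + d v"
  shows "N u \<subseteq> {1..n} \<and> N u \<noteq> {} \<and> N u \<noteq> {1..n} \<and> W_set n (N u) \<subseteq> G
     \<and> n * (n - 1) \<le> 4 * card (N u) * (n - card (N u)) \<and> d u + d v = n"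
proof -
  let ?V = "{1..n}"
  have disj: "N u \<inter> N v = {}"
    using no_tri uv adj_sym by (auto simp: mem_N)
  have cU: "card (N u \<union> N v) = d u + d v"
    unfolding d_def by (rule card_Un_disjoint) (auto simp: finN disj)
  have sU: "N u \<union> N v \<subseteq> ?V" using N_sub by auto
  have "card (N u \<union> N v) \<le> n" using card_mono[OF _ sU] by simp
  then have sum: "d u + d v = n" using ge cU by simp
  have U: "N u \<union> N v = ?V" using card_subset_eq[OF _ sU] cU sum by simp
  have VB: "?V - N u = N v" using U disj by auto
  have vin: "v \<in> N u" using uv by (simp add: mem_N)
  have uout: "u \<notin> N u" by (rule notin_N)
  have uV: "u \<in> ?V" using adjV uv by blast
  have W: "W_set n (N u) \<subseteq> G"
  proof
    fix g assume "g \<in> W_set n (N u)"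
    then obtain i j where g: "g = {i,j}" "i \<noteq> j"
      and ij: "(i \<in> N u \<and> j \<in> N u) \<or> (i \<in> ?V - N u \<and> j \<in> ?V - N u)"
      unfolding W_set_def by blast
    have iV: "i \<in> ?V" "j \<in> ?V" using ij N_sub[of u] by blast+
    show "g \<in> G"
    proof (rule ccontr)
      assume "g \<notin> G"
      then have aij: "adj i j" using g iV unfolding adj_def by auto
      show False
      proof (cases "i \<in> N u \<and> j \<in> N u")
        case True
        then show False using no_tri[of u i j] aij by (auto simp: mem_N)
      next
        case False
        then have "i \<in> N v \<and> j \<in> N v" using ij VB by auto
        then show False using no_tri[of v i j] aij by (auto simp: mem_N)
      qed
    qed
  qed
  have Psub: "P \<subseteq> (N u \<times> (?V - N u)) \<union> ((?V - N u) \<times> N u)"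
  proof
    fix p assume "p \<in> P"
    then obtain x y where p: "p = (x,y)" "adj x y" using P_mem by (cases p) auto
    have xy: "x \<in> ?V" "y \<in> ?V" using adjV p(2) by auto
    have "\<not> (x \<in> N u \<and> y \<in> N u)" using no_tri[of u x y] p(2) mem_N by blast
    moreover have "\<not> (x \<in> N v \<and> y \<in> N v)" using no_tri[of v x y] p(2) mem_N by blast
    ultimately show "p \<in> (N u \<times> (?V - N u)) \<union> ((?V - N u) \<times> N u)"
      using p xy VB by blast
  qed
  have cD: "card (?V - N u) = n - card (N u)" using card_Diff_subset[OF finN N_sub] by simp
  have "card P \<le> card ((N u \<times> (?V - N u)) \<union> ((?V - N u) \<times> N u))"
    by (rule card_mono[OF _ Psub]) (auto simp: finN)
  also have "\<dots> \<le> card (N u \<times> (?V - N u)) + card ((?V - N u) \<times> N u)" by (rule card_Un_le)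
  also have "\<dots> = 2 * (card (N u) * (n - card (N u)))" using cD by (simp add: card_cartesian_product)
  finally have "card P \<le> 2 * (card (N u) * (n - card (N u)))" .
  then have "n * (n - 1) \<le> 4 * card (N u) * (n - card (N u))" using cardP by linarith
  moreover have "N u \<noteq> ?V" using uV uout by blast
  moreover have "N u \<noteq> {}" using vin by blast
  ultimately show ?thesis using W sum N_sub[of u] by blast
qed

lemma typeB:
  "(\<exists>B. B \<subseteq> {1..n} \<and> B \<noteq> {} \<and> B \<noteq> {1..n} \<and> W_set n B \<subseteq> G
     \<and> n * (n - 1) \<le> 4 * card B * (n - card B) \<and> 2 * card B \<le> n)
   \<or> (\<forall>x\<in>{1..n}. 2 * d x + 1 = n)"
proof (cases "\<exists>u v. adj u v \<and> n \<le> d u + d v")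
  case True
  then obtain u v where uv: "adj u v" "n \<le> d u + d v" by blast
  show ?thesis
  proof (cases "d u \<le> d v")
    case True
    then show ?thesis using part[OF uv] unfolding d_def by (intro disjI1 exI[of _ "N u"]) auto
  next
    case False
    have uv': "adj v u" "n \<le> d v + d u" using uv adj_sym by auto
    show ?thesis using part[OF uv'] False part[OF uv] unfolding d_def by (intro disjI1 exI[of _ "N v"]) auto
  qed
next
  case False
  then show ?thesis using dich by blast
qed

end


context fg begin

lemma reg_4k: assumes "n = 4 * k" "k > 0" "\<forall>x\<in>{1..n}. 2 * d x + 1 = n" shows False
proof -
  have "1 \<in> {1..n}" using assms by simp
  then have "2 * d 1 + 1 = 4 * k" using assms by simp
  then show False by presburger
qed

lemma disjN: "adj u v \<Longrightarrow> N u \<inter> N v = {}"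
  using no_tri adj_sym by (auto simp: mem_N)

lemma bnd:
  assumes reg: "\<And>x. x \<in> {1..n} \<Longrightarrow> d x = m" and uv: "adj u v" and wV: "w \<in> {1..n}"
    and wu: "w \<notin> N u" and wv: "w \<notin> N v" and V: "{1..n} = N u \<union> N v \<union> {w}"
    and x: "x \<in> N w \<inter> N u"
  shows "card (N w \<inter> N v) \<le> 1"
proof -
  let ?Bs = "N w \<inter> N v"
  have sub: "N x \<subseteq> (N v - ?Bs) \<union> {w}"
  proof
    fix z assume z: "z \<in> N x"
    have zV: "z \<in> {1..n}" using z N_sub by blast
    have axz: "adj x z" using z mem_N by blast
    have aux: "adj u x" using x mem_N by blast
    have awx: "adj w x" using x mem_N by blast
    have "z \<notin> N u" using no_tri[of u x z] aux axz mem_N by blast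
    moreover have "z \<notin> N w" using no_tri[of w x z] awx axz mem_N by blast
    ultimately show "z \<in> (N v - ?Bs) \<union> {w}" using zV V by blast
  qed
  have xV: "x \<in> {1..n}" using x N_sub by blast
  have vV: "v \<in> {1..n}" using uv adjV by blast
  have "m = card (N x)" using reg[OF xV] d_def by simp
  also have "\<dots> \<le> card ((N v - ?Bs) \<union> {w})" by (rule card_mono[OF _ sub]) (simp add: finN)
  also have "\<dots> \<le> card (N v - ?Bs) + 1" using card_Un_le[of "N v - ?Bs" "{w}"] by simp
  also have "card (N v - ?Bs) = card (N v) - card ?Bs" by (rule card_Diff_subset) (auto simp: finN)
  finally have "m \<le> card (N v) - card ?Bs + 1" .
  moreover have "card (N v) = m" using reg[OF vV] d_def by simp
  moreover have "card ?Bs \<le> card (N v)" by (rule card_mono) (auto simp: finN)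
  ultimately show ?thesis by linarith
qed

lemma reg_4k1: assumes n: "n = 4 * k + 1" and k: "k > 0" and r: "\<forall>x\<in>{1..n}. 2 * d x + 1 = n"
  shows "k \<le> 1"
proof -
  let ?V = "{1..n}"
  have reg: "\<And>x. x \<in> ?V \<Longrightarrow> d x = 2 * k" using r n by fastforce
  have uV: "1 \<in> ?V" using n by simp
  have "card (N 1) = 2 * k" using reg[OF uV] d_def by simp
  then have "N 1 \<noteq> {}" using k by auto
  then obtain v where v: "v \<in> N 1" by blast
  define u :: nat where "u = 1"
  have uv: "adj u v" using v mem_N u_def by blast
  have vV: "v \<in> ?V" using uv adjV by blast
  have dj: "N u \<inter> N v = {}" by (rule disjN[OF uv])
  have cU: "card (N u \<union> N v) = 4 * k"
    using card_Un_disjoint[OF finN finN dj] reg[OF uV] reg[OF vV] d_def u_def by simp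
  have sU: "N u \<union> N v \<subseteq> ?V" using N_sub by auto
  have "card (?V - (N u \<union> N v)) = card ?V - card (N u \<union> N v)"
    by (rule card_Diff_subset[OF _ sU]) (simp add: finN)
  then have "card (?V - (N u \<union> N v)) = 1" using cU n by simp
  then obtain w where w: "?V - (N u \<union> N v) = {w}" using card_1_singletonE by blast
  have wV: "w \<in> ?V" and wu: "w \<notin> N u" and wv: "w \<notin> N v" using w by auto
  have V: "?V = N u \<union> N v \<union> {w}" using w sU by blast
  have Nw: "N w = (N w \<inter> N u) \<union> (N w \<inter> N v)" using N_sub[of w] notin_N[of w] V by blast
  have cw: "card (N w \<inter> N u) + card (N w \<inter> N v) = 2 * k"
  proof -
    have "card (N w) = card (N w \<inter> N u) + card (N w \<inter> N v)"
      by (subst Nw, rule card_Un_disjoint) (use dj finN in auto)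
    then show ?thesis using reg[OF wV] d_def by simp
  qed
  have vw: "v \<notin> N w" using wv adj_sym mem_N by blast
  have uw: "u \<notin> N w" using wu adj_sym mem_N by blast
  have "card (N w \<inter> N u) \<le> card (N u - {v})" by (rule card_mono) (use vw finN in auto)
  also have "\<dots> = 2 * k - 1" using v reg[OF uV] d_def u_def by (simp add: finN)
  finally have a1: "card (N w \<inter> N u) \<le> 2 * k - 1" .
  have "card (N w \<inter> N v) \<le> card (N v - {u})" by (rule card_mono) (use uw finN in auto)
  also have "\<dots> = 2 * k - 1" using uv reg[OF vV] d_def adj_sym mem_N by (simp add: finN)
  finally have b1: "card (N w \<inter> N v) \<le> 2 * k - 1" .
  have "card (N w \<inter> N u) \<noteq> 0" using a1 b1 cw k by linarith
  then have "N w \<inter> N u \<noteq> {}" by auto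
  then obtain x where x: "x \<in> N w \<inter> N u" by blast
  have "card (N w \<inter> N v) \<noteq> 0" using a1 b1 cw k by linarith
  then have "N w \<inter> N v \<noteq> {}" by auto
  then obtain y where y: "y \<in> N w \<inter> N v" by blast
  have B: "card (N w \<inter> N v) \<le> 1" by (rule bnd[OF reg uv wV wu wv V x])
  have V': "?V = N v \<union> N u \<union> {w}" using V by blast
  have A: "card (N w \<inter> N u) \<le> 1" by (rule bnd[OF reg adj_sym[OF uv] wV wv wu V' y])
  show ?thesis using A B cw by linarith
qed

end


lemma two_el: assumes "card S = 2" "x \<in> S" shows "\<exists>y. S = {x,y} \<and> y \<noteq> x"
proof -
  have "card (S - {x}) = 1" using assms by (simp add: card_Diff_singleton_if)
  then obtain y where y: "S - {x} = {y}" by (rule card_1_singletonE)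
  have "S = insert x (S - {x})" using assms(2) by blast
  then have "S = {x,y}" using y by simp
  moreover have "y \<noteq> x" using y by blast
  ultimately show ?thesis by blast
qed
lemma card2E: assumes "card S = 2" obtains x y where "S = {x,y}" "x \<noteq> y"
  using assms card_2_iff by metis

context fg begin

lemma reg_5: assumes n: "n = 5" and r: "\<forall>x\<in>{1..n}. 2 * d x + 1 = n" shows "G \<in> C5"
proof -
  let ?V = "{1..n}"
  have reg: "\<And>x. x \<in> ?V \<Longrightarrow> card (N x) = 2" using r n d_def by fastforce
  have cV5: "card ?V = 5" using n by simp
  have oV: "(1::nat) \<in> ?V" using n by simp
  obtain a b where N1: "N 1 = {a,b}" "a \<noteq> b" using reg[OF oV] by (rule card2E)
  have a1: "adj 1 a" "adj 1 b" using N1 mem_N by blast+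
  have aV: "a \<in> ?V" "b \<in> ?V" "a \<noteq> 1" "b \<noteq> 1" using a1 adjV by blast+
  have nab: "\<not> adj a b" using no_tri[of 1 a b] a1 by blast
  obtain c where Na: "N a = {1,c}" "c \<noteq> 1" using two_el[OF reg[OF aV(1)], of 1] adj_sym a1 mem_N by blast
  obtain e where Nb: "N b = {1,e}" "e \<noteq> 1" using two_el[OF reg[OF aV(2)], of 1] adj_sym a1 mem_N by blast
  have ac: "adj a c" using Na mem_N by blast
  have be: "adj b e" using Nb mem_N by blast
  have cV: "c \<in> ?V" "c \<noteq> a" "c \<noteq> b" using ac adjV nab by blast+
  have eV: "e \<in> ?V" "e \<noteq> b" "e \<noteq> a" using be adjV nab adj_sym by blast+
  have ce: "c \<noteq> e"
  proof
    assume ce: "c = e"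
    have s4: "{1,a,b,c} \<subseteq> ?V" using oV aV cV by blast
    have c4: "card {1,a,b,c} = 4" using aV cV N1 Na by auto
    have "card (?V - {1,a,b,c}) = card ?V - card {1,a,b,c}" by (rule card_Diff_subset[OF _ s4]) simp
    then have "card (?V - {1,a,b,c}) = 1" unfolding c4 cV5 by simp
    then obtain f where f: "?V - {1,a,b,c} = {f}" by (rule card_1_singletonE)
    have fV: "f \<in> ?V" "f \<noteq> 1" "f \<noteq> a" "f \<noteq> b" "f \<noteq> c" using f by blast+
    have V5: "?V = {1,a,b,c,f}" using f s4 by blast
    have "N f \<subseteq> {c}"
    proof
      fix z assume z: "z \<in> N f"
      have afz: "adj f z" using z mem_N by blast
      have "z \<in> ?V" "z \<noteq> f" using afz adjV by blast+
      moreover have "z \<noteq> 1" using afz adj_sym mem_N N1 fV by blast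
      moreover have "z \<noteq> a" using afz adj_sym mem_N Na fV by blast
      moreover have "z \<noteq> b" using afz adj_sym mem_N Nb fV ce by blast
      ultimately show "z \<in> {c}" using V5 by blast
    qed
    then have "card (N f) \<le> 1" using card_mono[of "{c}" "N f"] by simp
    then show False using reg[OF fV(1)] by simp
  qed
  have d5: "card {1,a,b,c,e} = 5" using aV cV eV ce N1 Na Nb by auto
  have V5: "?V = {1,a,b,c,e}"
    using card_subset_eq[of ?V "{1,a,b,c,e}"] d5 cV5 oV aV cV eV by auto
  have Nc: "N c \<subseteq> {a,e}"
  proof
    fix z assume z: "z \<in> N c"
    have acz: "adj c z" using z mem_N by blast
    have "z \<in> ?V" "z \<noteq> c" using acz adjV by blast+
    moreover have "z \<noteq> 1" using acz adj_sym mem_N N1 cV by blast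
    moreover have "z \<noteq> b" using acz adj_sym mem_N Nb cV ce Na by blast
    ultimately show "z \<in> {a,e}" using V5 by blast
  qed
  have "N c = {a,e}"
    using card_subset_eq[OF _ Nc] reg[OF cV(1)] eV by simp
  then have cee: "adj c e" using mem_N by blast
  have n1c: "\<not> adj 1 c" using N1 mem_N cV by blast
  have n1e: "\<not> adj 1 e" using N1 mem_N eV by blast
  have nae: "\<not> adj a e" using Na mem_N Nb(2) ce by blast
  have nbc: "\<not> adj b c" using Nb mem_N cV ce Na by blast
  let ?E = "{{1,c},{c,b},{b,a},{a,e},{e,1}}"
  have GE: "G = ?E"
  proof
    show "G \<subseteq> ?E"
    proof
      fix g assume g: "g \<in> G"
      obtain x y where xy: "g = {x,y}" "x \<noteq> y" using c2[OF g] by (rule card2E)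
      have xm: "x \<in> {1,a,b,c,e}" "y \<in> {1,a,b,c,e}" using sub[OF g] xy V5 by blast+
      have na: "\<not> adj x y" using g xy unfolding adj_def by blast
      have "(x=1\<and>y=c)\<or>(x=c\<and>y=1)\<or>(x=c\<and>y=b)\<or>(x=b\<and>y=c)\<or>(x=b\<and>y=a)\<or>(x=a\<and>y=b)
          \<or>(x=a\<and>y=e)\<or>(x=e\<and>y=a)\<or>(x=e\<and>y=1)\<or>(x=1\<and>y=e)"
        using xm na xy(2) a1 ac be cee adj_sym[of 1 a] adj_sym[of 1 b] adj_sym[of a c]
          adj_sym[of b e] adj_sym[of c e] by blast
      then show "g \<in> ?E" using xy(1) by (elim disjE) (simp_all add: insert_commute)
    qed
    show "?E \<subseteq> G"
    proof -
      have "{1,c} \<in> G" using notadj_G[OF oV cV(1)] n1c Na by auto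
      moreover have "{c,b} \<in> G" using notadj_G[OF cV(1) aV(2)] nbc adj_sym cV by blast
      moreover have "{b,a} \<in> G" using notadj_G[OF aV(2) aV(1)] nab adj_sym N1 by blast
      moreover have "{a,e} \<in> G" using notadj_G[OF aV(1) eV(1)] nae eV by blast
      moreover have "{e,1} \<in> G" using notadj_G[OF eV(1) oV] n1e adj_sym Nb by blast
      ultimately show ?thesis by blast
    qed
  qed
  define p :: "nat \<Rightarrow> nat" where "p i = (if i = 1 then 1 else if i = 2 then c else if i = 3 then b else if i = 4 then a else e)" for i
  have I5: "{1..5::nat} = {1,2,3,4,5}" by auto
  have pim: "p ` {1..5} = {1,a,b,c,e}" unfolding I5 p_def by auto
  have inj: "inj_on p {1..5}"
    by (rule eq_card_imp_inj_on) (use pim d5 in simp_all)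
  have "p ` {1..5} = {1..5}" using pim V5[unfolded n] by (simp only:)
  then have bij: "bij_betw p {1..5} {1..5}" using inj unfolding bij_betw_def by blast
  have pv: "p 1 = 1" "p 2 = c" "p 3 = b" "p 4 = a" "p 5 = e" by (simp_all add: p_def)
  have "(\<lambda>i. {p i, p (i mod 5 + 1)}) ` {1,2,3,4,5} = {{p 1, p 2}, {p 2, p 3}, {p 3, p 4}, {p 4, p 5}, {p 5, p 1}}"
  proof -
    have m: "(1::nat) mod 5 + 1 = 2" "(2::nat) mod 5 + 1 = 3" "(3::nat) mod 5 + 1 = 4"
      "(4::nat) mod 5 + 1 = 5" "(5::nat) mod 5 + 1 = 1" by simp_all
    show ?thesis by (simp only: image_insert image_empty m)
  qed
  then have img: "(\<lambda>i. {p i, p (i mod 5 + 1)}) ` {1..5} = ?E" unfolding I5 pv by (simp only:)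
  show ?thesis unfolding C5_def
  proof (intro CollectI exI[of _ p] conjI)
    show "bij_betw p {1..5} {1..5}" by (rule bij)
    show "G = (\<lambda>i. {p i, p (i mod 5 + 1)}) ` {1..5}" by (simp only: GE img)
  qed
qed

end


lemma V2I:
  assumes fin: "finite G" and gs: "\<And>g. g \<in> G \<Longrightarrow> g \<subseteq> {1..n}" and c2: "\<And>g. g \<in> G \<Longrightarrow> card g = 2"
    and cov: "\<Union>G = {1..n}" and half: "2 * card G = n choose 2"
    and t3: "\<And>T. T \<subseteq> {1..n} \<Longrightarrow> card T = 3 \<Longrightarrow> \<exists>g\<in>G. g \<subseteq> T"
  shows "G \<in> V2 n"
proof -
  have fg: "\<And>g. g \<in> G \<Longrightarrow> finite g" using c2 by (intro card_ge_0_finite) simp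
  have sq: "sqfree_gens n G" unfolding sqfree_gens_def
  proof (intro conjI ballI impI)
    show "finite G" by (rule fin)
    fix g assume g: "g \<in> G" then show "g \<subseteq> {1..n}" by (rule gs)
    fix h assume h: "h \<in> G" "g \<subseteq> h"
    show "g = h" using card_subset_eq[OF fg[OF h(1)] h(2)] c2[OF g] c2[OF h(1)] by simp
  qed
  have fv: "fvec (facet_complex G) k = fvec (SR_complex n G) k" for k
  proof (cases k)
    case 0
    have "{F \<in> facet_complex G. card F = Suc 0} = {F \<in> SR_complex n G. card F = Suc 0}"
    proof (rule set_eqI, rule iffI)
      fix F assume F: "F \<in> {F \<in> facet_complex G. card F = Suc 0}"
      then obtain x where x: "F = {x}" by (auto simp: card_Suc_eq)
      from F obtain g where "g \<in> G" "F \<subseteq> g" unfolding facet_complex_def by blast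
      then have xV: "x \<in> {1..n}" using cov x by blast
      have "\<not> (\<exists>g\<in>G. g \<subseteq> F)"
      proof
        assume "\<exists>g\<in>G. g \<subseteq> F"
        then obtain g where g: "g \<in> G" "g \<subseteq> F" by blast
        have "card g \<le> card F" by (rule card_mono) (use x g in auto)
        then show False using c2[OF g(1)] x by simp
      qed
      then show "F \<in> {F \<in> SR_complex n G. card F = Suc 0}" unfolding SR_complex_def using x xV by simp
    next
      fix F assume F: "F \<in> {F \<in> SR_complex n G. card F = Suc 0}"
      then obtain x where x: "F = {x}" by (auto simp: card_Suc_eq)
      have "x \<in> {1..n}" using F x unfolding SR_complex_def by blast
      then obtain g where "g \<in> G" "x \<in> g" using cov by blast
      then show "F \<in> {F \<in> facet_complex G. card F = Suc 0}" unfolding facet_complex_def using x by auto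
    qed
    then show ?thesis using 0 by (simp add: fvec_def)
  next
    case (Suc m)
    show ?thesis
    proof (cases m)
      case 0
      let ?T = "{A. A \<subseteq> {1..n} \<and> card A = 2}"
      have f1: "{F \<in> facet_complex G. card F = Suc 1} = G"
      proof
        show "{F \<in> facet_complex G. card F = Suc 1} \<subseteq> G"
        proof
          fix F assume "F \<in> {F \<in> facet_complex G. card F = Suc 1}"
          then obtain g where g: "g \<in> G" "F \<subseteq> g" "card F = 2" by (auto simp: facet_complex_def)
          show "F \<in> G" using card_subset_eq[OF fg[OF g(1)] g(2)] c2[OF g(1)] g by simp
        qed
        show "G \<subseteq> {F \<in> facet_complex G. card F = Suc 1}" using c2 by (auto simp: facet_complex_def)
      qed
      have s1: "{F \<in> SR_complex n G. card F = Suc 1} = ?T - G"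
      proof
        show "{F \<in> SR_complex n G. card F = Suc 1} \<subseteq> ?T - G" by (auto simp: SR_complex_def)
        show "?T - G \<subseteq> {F \<in> SR_complex n G. card F = Suc 1}"
        proof
          fix F assume F: "F \<in> ?T - G"
          have cF: "card F = 2" using F by simp
          have "\<not> (\<exists>g\<in>G. g \<subseteq> F)"
          proof
            assume "\<exists>g\<in>G. g \<subseteq> F"
            then obtain g where g: "g \<in> G" "g \<subseteq> F" by blast
            have "finite F" using cF by (intro card_ge_0_finite) simp
            then have "g = F" using card_subset_eq[OF _ g(2)] c2[OF g(1)] cF by simp
            then show False using F g by blast
          qed
          then show "F \<in> {F \<in> SR_complex n G. card F = Suc 1}" using F by (auto simp: SR_complex_def)
        qed
      qed
      have GT: "G \<subseteq> ?T" using gs c2 by auto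
      have "card (?T - G) = card ?T - card G" using GT fin by (simp add: card_Diff_subset)
      also have "card ?T = n choose 2" using n_subsets[of "{1..n}" 2] by simp
      finally have "card (?T - G) = card G" using half by simp
      then show ?thesis using Suc 0 f1 s1 by (simp add: fvec_def)
    next
      case (Suc j)
      have e1: "{F \<in> facet_complex G. card F = Suc k} = {}"
      proof -
        { fix F g assume g: "g \<in> G" "F \<subseteq> g" "card F = Suc k"
          have "card F \<le> card g" by (rule card_mono[OF fg[OF g(1)] g(2)])
          then have False using c2[OF g(1)] g(3) \<open>k = Suc m\<close> Suc by simp }
        then show ?thesis unfolding facet_complex_def by blast
      qed
      have e2: "{F \<in> SR_complex n G. card F = Suc k} = {}"
      proof -
        { fix F assume F: "F \<subseteq> {1..n}" "\<not> (\<exists>g\<in>G. g \<subseteq> F)" "card F = Suc k"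
          have "3 \<le> card F" using F(3) \<open>k = Suc m\<close> Suc by simp
          then obtain T where T: "T \<subseteq> F" "card T = 3" by (meson obtain_subset_with_card_n)
          then obtain g where "g \<in> G" "g \<subseteq> T" using t3 F(1) by (meson subset_trans)
          then have False using F(2) T(1) by blast }
        then show ?thesis unfolding SR_complex_def by blast
      qed
      show ?thesis unfolding fvec_def e1 e2 ..
    qed
  qed
  show ?thesis unfolding V2_def is_f_ideal_def using sq fv c2 by blast
qed

lemma five_cases: "i \<in> {1..5::nat} \<Longrightarrow> i = 1 \<or> i = 2 \<or> i = 3 \<or> i = 4 \<or> i = 5" by auto

lemma C5_V2: assumes "G \<in> C5" shows "G \<in> V2 5"
proof -
  let ?s = "\<lambda>i::nat. i mod 5 + 1"
  obtain p where bij: "bij_betw p {1..5::nat} {1..5}" and G: "G = (\<lambda>i. {p i, p (?s i)}) ` {1..5}"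
    using assms unfolding C5_def by blast
  have inj: "inj_on p {1..5}" and im: "p ` {1..5} = {1..5}" using bij unfolding bij_betw_def by auto
  have sV: "\<And>i. i \<in> {1..5::nat} \<Longrightarrow> ?s i \<in> {1..5}" by auto
  have sne: "\<And>i. i \<in> {1..5::nat} \<Longrightarrow> ?s i \<noteq> i"
    by (drule five_cases) (elim disjE; simp)
  have pV: "\<And>i. i \<in> {1..5::nat} \<Longrightarrow> p i \<in> {1..5}" using im by blast
  have pne: "\<And>i. i \<in> {1..5::nat} \<Longrightarrow> p i \<noteq> p (?s i)"
    using inj sV sne unfolding inj_on_def by metis
  have fin: "finite G" using G by simp
  have gs: "g \<subseteq> {1..5}" if "g \<in> G" for g using that G pV sV by auto
  have c2: "card g = 2" if "g \<in> G" for g using that G pne by auto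
  have cov: "\<Union>G = {1..5}"
  proof
    show "\<Union>G \<subseteq> {1..5}" using gs by blast
    show "{1..5} \<subseteq> \<Union>G"
    proof
      fix y assume "y \<in> {1..5::nat}"
      then obtain i where i: "i \<in> {1..5}" "y = p i" using im by blast
      then show "y \<in> \<Union>G" using G by blast
    qed
  qed
  have injE: "inj_on (\<lambda>i. {p i, p (?s i)}) {1..5}"
  proof (rule inj_onI)
    fix i j assume i: "i \<in> {1..5::nat}" and j: "j \<in> {1..5::nat}" and eq: "{p i, p (?s i)} = {p j, p (?s j)}"
    have "(p i = p j \<and> p (?s i) = p (?s j)) \<or> (p i = p (?s j) \<and> p (?s i) = p j)"
      using eq by (simp add: doubleton_eq_iff)
    then have "i = j \<or> (i = ?s j \<and> ?s i = j)" using inj i j sV unfolding inj_on_def by metis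
    moreover have "\<not> (i = ?s j \<and> ?s i = j)"
      using five_cases[OF i] five_cases[OF j] by (elim disjE; simp)
    ultimately show "i = j" by blast
  qed
  have "card G = 5" using G card_image[OF injE] by simp
  then have half: "2 * card G = 5 choose 2" by (simp add: choose_two)
  have t3: "\<exists>g\<in>G. g \<subseteq> T" if T: "T \<subseteq> {1..5}" "card T = 3" for T
  proof -
    obtain x y z where xyz: "T = {x,y,z}" "x \<noteq> y" "y \<noteq> z" "x \<noteq> z" using T(2) card_3_iff by metis
    have "x \<in> p ` {1..5}" "y \<in> p ` {1..5}" "z \<in> p ` {1..5}" using T(1) xyz im by auto
    then obtain i j l where ijl: "i \<in> {1..5}" "j \<in> {1..5}" "l \<in> {1..5}" "x = p i" "y = p j" "z = p l"
      by blast
    have dist: "i \<noteq> j" "j \<noteq> l" "i \<noteq> l" using ijl xyz by blast+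
    have "\<exists>t\<in>{i,j,l}. ?s t \<in> {i,j,l}"
      using five_cases[OF ijl(1)] five_cases[OF ijl(2)] five_cases[OF ijl(3)] dist by (elim disjE; simp)
    then obtain t where t: "t \<in> {i,j,l}" "?s t \<in> {i,j,l}" by blast
    have tV: "t \<in> {1..5}" using t ijl by blast
    have "{p t, p (?s t)} \<in> G" using G tV by blast
    moreover have "p t \<in> T" using t(1) xyz(1) ijl(4-6) by auto
    moreover have "p (?s t) \<in> T"
    proof -
      obtain r where r: "r \<in> {i,j,l}" "?s t = r" using t(2) by blast
      have "p r \<in> T" using r(1) xyz(1) ijl(4-6) by auto
      then show ?thesis using r(2) by (simp only:)
    qed
    ultimately have "{p t, p (?s t)} \<in> G \<and> {p t, p (?s t)} \<subseteq> T" by blast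
    then show ?thesis by blast
  qed
  show ?thesis by (rule V2I[OF fin gs c2 cov half t3]) auto
qed



lemma fgI: "G \<in> V2 n \<Longrightarrow> fg n G"
  unfolding fg_def using V2D[of G n] by blast

lemma W_sub: "W_type n l \<subseteq> V2 n" unfolding W_type_def by blast

lemma types:
  assumes "G \<in> V2 n"
  shows "(\<exists>B. B \<subseteq> {1..n} \<and> B \<noteq> {} \<and> B \<noteq> {1..n} \<and> W_set n B \<subseteq> G
     \<and> n * (n - 1) \<le> 4 * card B * (n - card B) \<and> 2 * card B \<le> n)
   \<or> (\<forall>x\<in>{1..n}. 2 * fg.d n G x + 1 = n)"
  using fg.typeB[OF fgI[OF assms]] .

lemma inW: "G \<in> V2 n \<Longrightarrow> B \<subseteq> {1..n} \<Longrightarrow> B \<noteq> {} \<Longrightarrow> B \<noteq> {1..n} \<Longrightarrow> W_set n B \<subseteq> G \<Longrightarrow> card B = l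
  \<Longrightarrow> G \<in> W_type n l"
  unfolding W_type_def by blast

lemma arith4k:
  fixes k l :: nat
  assumes k: "k > 0" and l: "2 * l \<le> 4 * k" and h: "4 * k * (4 * k - 1) \<le> 4 * l * (4 * k - l)"
  shows "(2 * k - l) * (2 * k - l) \<le> k"
proof -
  define K where "K = int k"
  define L where "L = int l"
  have h': "4 * K * (4 * K - 1) \<le> 4 * L * (4 * K - L)"
  proof -
    have "int (4 * k * (4 * k - 1)) \<le> int (4 * l * (4 * k - l))" using h by linarith
    then show ?thesis using k l unfolding K_def L_def by (simp add: of_nat_diff)
  qed
  have id: "4 * K * (4 * K - 1) - 4 * L * (4 * K - L) = 4 * ((2*K - L) * (2*K - L)) - 4 * K"
    by (simp add: algebra_simps)
  have "(2*K - L) * (2*K - L) \<le> K" using h' id by linarith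
  moreover have "int (2 * k - l) = 2*K - L" using l unfolding K_def L_def by (simp add: of_nat_diff)
  ultimately have "int ((2 * k - l) * (2 * k - l)) \<le> int k" unfolding K_def by simp
  then show ?thesis by linarith
qed

lemma arith4k1:
  fixes k l :: nat
  assumes l: "2 * l \<le> 4 * k + 1" and h: "(4 * k + 1) * (4 * k + 1 - 1) \<le> 4 * l * (4 * k + 1 - l)"
  shows "(2 * k - l) * (2 * k - l) + (2 * k - l) \<le> k" and "l \<le> 2 * k"
proof -
  show l2: "l \<le> 2 * k" using l by linarith
  define K where "K = int k"
  define L where "L = int l"
  have h': "(4 * K + 1) * (4 * K) \<le> 4 * L * (4 * K + 1 - L)"
  proof -
    have e1: "int (4 * l * (4 * k + 1 - l)) = 4 * L * (4 * K + 1 - L)"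
      using l2 unfolding K_def L_def by (simp add: of_nat_diff)
    have e2: "int ((4 * k + 1) * (4 * k + 1 - 1)) = (4 * K + 1) * (4 * K)" unfolding K_def by (simp add: algebra_simps)
    have "int ((4 * k + 1) * (4 * k + 1 - 1)) \<le> int (4 * l * (4 * k + 1 - l))" using h by linarith
    then show ?thesis unfolding e1 e2 .
  qed
  have id: "(4 * K + 1) * (4 * K) - 4 * L * (4 * K + 1 - L) = 4 * ((2*K - L) * (2*K - L)) + 4 * (2*K - L) - 4 * K"
    by (simp add: algebra_simps)
  have g: "\<And>a b X Y::int. a \<le> b \<Longrightarrow> a - b = 4 * X + 4 * Y - 4 * K \<Longrightarrow> X + Y \<le> K" by linarith
  have "(2*K - L) * (2*K - L) + (2*K - L) \<le> K" by (rule g[OF h' id])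
  moreover have "int (2 * k - l) = 2*K - L" using l2 unfolding K_def L_def by (simp add: of_nat_diff)
  ultimately have "int ((2 * k - l) * (2 * k - l) + (2 * k - l)) \<le> int k" unfolding K_def by simp
  then show "(2 * k - l) * (2 * k - l) + (2 * k - l) \<le> k" by linarith
qed

lemma sqrt_part1: assumes "i * i \<le> (k::nat)" shows "real i \<le> sqrt (real k)"
proof (rule real_le_rsqrt)
  have "real (i * i) \<le> real k" using assms by (simp only: of_nat_le_iff)
  then show "(real i)^2 \<le> real k" by (simp add: power2_eq_square)
qed

lemma sqrt_part2:
  assumes "i * i + i \<le> (k::nat)" shows "real i \<le> (sqrt (1 + 4 * real k) - 1) / 2"
proof -
  have "(2 * i + 1) * (2 * i + 1) \<le> 1 + 4 * k" using assms by (simp add: algebra_simps)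
  then have "(real (2 * i + 1))^2 \<le> 1 + 4 * real k"
  proof -
    have "real ((2 * i + 1) * (2 * i + 1)) \<le> real (1 + 4 * k)" using \<open>(2 * i + 1) * (2 * i + 1) \<le> 1 + 4 * k\<close> by (simp only: of_nat_le_iff)
    then show ?thesis by (simp add: power2_eq_square algebra_simps)
  qed
  then have "real (2 * i + 1) \<le> sqrt (1 + 4 * real k)" by (rule real_le_rsqrt)
  then show ?thesis by simp
qed

theorem theorem4p8:
  fixes k :: nat
  assumes "k > 0"
  shows "V2 (4 * k) = (\<Union>i\<in>{i::nat. real i \<le> sqrt (real k)}. W_type (4 * k) (2 * k - i))
    \<and> (k \<noteq> 1 \<longrightarrow> V2 (4 * k + 1) =
           (\<Union>i\<in>{i::nat. real i \<le> (sqrt (1 + 4 * real k) - 1) / 2}. W_type (4 * k + 1) (2 * k - i)))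
    \<and> V2 5 = W_type 5 2 \<union> C5
    \<and> V2 (4 * k + 2) = {}
    \<and> V2 (4 * k + 3) = {}"
proof (intro conjI impI)
  show "V2 (4 * k) = (\<Union>i\<in>{i::nat. real i \<le> sqrt (real k)}. W_type (4 * k) (2 * k - i))"
  proof
    show "(\<Union>i\<in>{i::nat. real i \<le> sqrt (real k)}. W_type (4 * k) (2 * k - i)) \<subseteq> V2 (4 * k)"
      using W_sub by blast
    show "V2 (4 * k) \<subseteq> (\<Union>i\<in>{i::nat. real i \<le> sqrt (real k)}. W_type (4 * k) (2 * k - i))"
    proof
      fix G assume G: "G \<in> V2 (4 * k)"
      from types[OF G] show "G \<in> (\<Union>i\<in>{i::nat. real i \<le> sqrt (real k)}. W_type (4 * k) (2 * k - i))"
      proof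
        assume "\<forall>x\<in>{1..4*k}. 2 * fg.d (4*k) G x + 1 = 4 * k"
        then have False using fg.reg_4k[OF fgI[OF G] refl assms] by blast
        then show ?thesis ..
      next
        assume "\<exists>B. B \<subseteq> {1..4*k} \<and> B \<noteq> {} \<and> B \<noteq> {1..4*k} \<and> W_set (4*k) B \<subseteq> G
          \<and> 4*k * (4*k - 1) \<le> 4 * card B * (4*k - card B) \<and> 2 * card B \<le> 4*k"
        then obtain B where B: "B \<subseteq> {1..4*k}" "B \<noteq> {}" "B \<noteq> {1..4*k}" "W_set (4*k) B \<subseteq> G"
          "4*k * (4*k - 1) \<le> 4 * card B * (4*k - card B)" "2 * card B \<le> 4*k" by blast
        define i where "i = 2 * k - card B"
        have "i * i \<le> k" unfolding i_def using arith4k[OF assms B(6) B(5)] .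
        then have ii: "i \<in> {i::nat. real i \<le> sqrt (real k)}" using sqrt_part1 by blast
        have "2 * k - i = card B" unfolding i_def using B(6) by simp
        then have "G \<in> W_type (4 * k) (2 * k - i)" using inW[OF G B(1-4)] by simp
        then show ?thesis using ii by blast
      qed
    qed
  qed
next
  assume k1: "k \<noteq> 1"
  show "V2 (4 * k + 1) =
           (\<Union>i\<in>{i::nat. real i \<le> (sqrt (1 + 4 * real k) - 1) / 2}. W_type (4 * k + 1) (2 * k - i))"
  proof
    show "(\<Union>i\<in>{i::nat. real i \<le> (sqrt (1 + 4 * real k) - 1) / 2}. W_type (4 * k + 1) (2 * k - i)) \<subseteq> V2 (4 * k + 1)"
      using W_sub by blast
    show "V2 (4 * k + 1) \<subseteq> (\<Union>i\<in>{i::nat. real i \<le> (sqrt (1 + 4 * real k) - 1) / 2}. W_type (4 * k + 1) (2 * k - i))"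
    proof
      fix G assume G: "G \<in> V2 (4 * k + 1)"
      from types[OF G] show "G \<in> (\<Union>i\<in>{i::nat. real i \<le> (sqrt (1 + 4 * real k) - 1) / 2}. W_type (4 * k + 1) (2 * k - i))"
      proof
        assume "\<forall>x\<in>{1..4*k+1}. 2 * fg.d (4*k+1) G x + 1 = 4 * k + 1"
        then have "k \<le> 1" using fg.reg_4k1[OF fgI[OF G] refl assms] by blast
        then have False using k1 assms by simp
        then show ?thesis ..
      next
        assume "\<exists>B. B \<subseteq> {1..4*k+1} \<and> B \<noteq> {} \<and> B \<noteq> {1..4*k+1} \<and> W_set (4*k+1) B \<subseteq> G
          \<and> (4*k+1) * (4*k+1 - 1) \<le> 4 * card B * (4*k+1 - card B) \<and> 2 * card B \<le> 4*k+1"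
        then obtain B where B: "B \<subseteq> {1..4*k+1}" "B \<noteq> {}" "B \<noteq> {1..4*k+1}" "W_set (4*k+1) B \<subseteq> G"
          "(4*k+1) * (4*k+1 - 1) \<le> 4 * card B * (4*k+1 - card B)" "2 * card B \<le> 4*k+1" by blast
        define i where "i = 2 * k - card B"
        have "i * i + i \<le> k" unfolding i_def using arith4k1(1)[OF B(6) B(5)] .
        then have ii: "i \<in> {i::nat. real i \<le> (sqrt (1 + 4 * real k) - 1) / 2}" using sqrt_part2 by blast
        have "2 * k - i = card B" unfolding i_def using arith4k1(2)[OF B(6) B(5)] by simp
        then have "G \<in> W_type (4 * k + 1) (2 * k - i)" using inW[OF G B(1-4)] by simp
        then show ?thesis using ii by blast
      qed
    qed
  qed
next
  show "V2 5 = W_type 5 2 \<union> C5"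
  proof
    show "W_type 5 2 \<union> C5 \<subseteq> V2 5" using W_sub C5_V2 by blast
    show "V2 5 \<subseteq> W_type 5 2 \<union> C5"
    proof
      fix G assume G: "G \<in> V2 5"
      from types[OF G] show "G \<in> W_type 5 2 \<union> C5"
      proof
        assume "\<forall>x\<in>{1..5}. 2 * fg.d 5 G x + 1 = 5"
        then have "G \<in> C5" using fg.reg_5[OF fgI[OF G] refl] by simp
        then show ?thesis ..
      next
        assume "\<exists>B. B \<subseteq> {1..5} \<and> B \<noteq> {} \<and> B \<noteq> {1..5} \<and> W_set 5 B \<subseteq> G
          \<and> 5 * (5 - 1) \<le> 4 * card B * (5 - card B) \<and> 2 * card B \<le> 5"
        then obtain B where B: "B \<subseteq> {1..5}" "B \<noteq> {}" "B \<noteq> {1..5}" "W_set 5 B \<subseteq> G"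
          "5 * (5 - 1) \<le> 4 * card B * (5 - card B)" "2 * card B \<le> 5" by blast
        have "card B = 0 \<or> card B = 1 \<or> card B = 2" using B(6) by linarith
        then have "card B = 2" using B(5) by auto
        then have "G \<in> W_type 5 2" using inW[OF G B(1-4)] by simp
        then show ?thesis ..
      qed
    qed
  qed
next
  show "V2 (4 * k + 2) = {}"
  proof (rule ccontr)
    assume "V2 (4 * k + 2) \<noteq> {}"
    then obtain G where G: "G \<in> V2 (4 * k + 2)" by blast
    have h: "2 * card G = (4 * k + 2) * (4 * k + 2 - 1) div 2" using V2D(4)[OF G] by (simp add: choose_two)
    have "(4 * k + 2) * (4 * k + 2 - 1) = 16 * (k * k) + 12 * k + 2" by (simp add: algebra_simps)
    then have "2 * card G = (16 * (k * k) + 12 * k + 2) div 2" using h by simp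
    then show False by presburger
  qed
next
  show "V2 (4 * k + 3) = {}"
  proof (rule ccontr)
    assume "V2 (4 * k + 3) \<noteq> {}"
    then obtain G where G: "G \<in> V2 (4 * k + 3)" by blast
    have h: "2 * card G = (4 * k + 3) * (4 * k + 3 - 1) div 2" using V2D(4)[OF G] by (simp add: choose_two)
    have "(4 * k + 3) * (4 * k + 3 - 1) = 16 * (k * k) + 20 * k + 6" by (simp add: algebra_simps)
    then have "2 * card G = (16 * (k * k) + 20 * k + 6) div 2" using h by simp
    then show False by presburger
  qed
qed

end
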